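(* Let $\mathbf{f}$ be a simple problem. Then for every subproblem $\mathbf{g}\subseteq\mathbf{f}$, $X^*(\mathbf{g})\subseteq X^*(\mathbf{f})$.
   Context: A problem is a finite set $\mathbf{f}=\{f_1,\dots,f_m\}$ of functions $f_i:\mathbb{R}^n\to\mathbb{R}$ together with a feasible region $X\subseteq\mathbb{R}^n$, to be minimized simultaneously. A subproblem $\mathbf{g}\subseteq\mathbf{f}$ is a subset of these functions (including $\emptyset$ and $\mathbf{f}$), with the same $X$; its evaluation map is $x\mapsto(f_i(x))_{f_i\in\mathbf{g}}\in\mathbb{R}^{|\mathbf{g}|}$. For $x,y\in X$, $x$ $\mathbf{g}$-dominates $y$ if $f_i(x)\le f_i(y)$ for all $f_i\in\mathbf{g}$ and $f_j(x)<f_j(y)$ for some $f_j\in\mathbf{g}$. The Pareto set $X^*(\mathbf{g})$ is the set of $x^*\in X$ not $\mathbf{g}$-dominated by any $x\in X$; by convention $X^*(\emptyset)=\emptyset$. A problem $\mathbf{f}$ is simple if every subproblem $\mathbf{g}\subseteq\mathbf{f}$ with $k=|\mathbf{g}|$ objectives satisfies: (S1) $X^*(\mathbf{g})$ is homeomorphic to $\Delta^{k-1}=\{t\in[0,1]^k:\sum t_i=1\}$ (with $\Delta^{-1}=\emptyset$); (S2) the evaluation map of $\mathbf{g}$ restricted to $X^*(\mathbf{g})$ is a topological embedding into $\mathbb{R}^k$. All sets carry the subspace topology from Euclidean space. *)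

theory Defs
  imports "HOL-Analysis.Analysis"
begin

text \<open>Objectives are real-valued functions on R^n (modelled as real^'n).
  A problem is a finite set F of such functions with feasible region X;
  a subproblem is any subset G of F.\<close>

definition dominates :: "((real^'n::finite) \<Rightarrow> real) set \<Rightarrow> real^'n \<Rightarrow> real^'n \<Rightarrow> bool"
  where "dominates G x y \<longleftrightarrow> (\<forall>g\<in>G. g x \<le> g y) \<and> (\<exists>g\<in>G. g x < g y)"

definition pareto_set :: "(real^'n::finite) set \<Rightarrow> ((real^'n) \<Rightarrow> real) set \<Rightarrow> (real^'n) set"
  where "pareto_set X G = (if G = {} then {} else {x \<in> X. \<not> (\<exists>y\<in>X. dominates G y x)})"

text \<open>Evaluation map of G into R^G (= R^|G|), realised as functions G -> real,
  extended by 0 outside G; the codomain carries the product topology.\<close>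
definition eval_map :: "((real^'n::finite) \<Rightarrow> real) set \<Rightarrow> real^'n \<Rightarrow> (((real^'n) \<Rightarrow> real) \<Rightarrow> real)"
  where "eval_map G x = (\<lambda>h. if h \<in> G then h x else 0)"

definition std_simplex :: "((real^'n::finite) \<Rightarrow> real) set \<Rightarrow> (((real^'n) \<Rightarrow> real) \<Rightarrow> real) set"
  where "std_simplex G = {t. (\<forall>h. h \<notin> G \<longrightarrow> t h = 0) \<and> (\<forall>h\<in>G. 0 \<le> t h) \<and> sum t G = 1}"

definition simple_problem :: "(real^'n::finite) set \<Rightarrow> ((real^'n) \<Rightarrow> real) set \<Rightarrow> bool"
  where "simple_problem X F \<longleftrightarrow> finite F \<and>
    (\<forall>G \<subseteq> F. pareto_set X G homeomorphic std_simplex G \<and>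
       (\<exists>e'. homeomorphism (pareto_set X G) (eval_map G ` pareto_set X G) (eval_map G) e'))"

end

theory Submission
  imports Defs
begin

theorem proposition3:
  fixes X :: "(real^'n::finite) set" and F G :: "((real^'n) \<Rightarrow> real) set"
  assumes "simple_problem X F" and "G \<subseteq> F"
  shows "pareto_set X G \<subseteq> pareto_set X F"
proof
  fix x assume xP: "x \<in> pareto_set X G"
  hence Gne: "G \<noteq> {}" by (auto simp: pareto_set_def)
  hence Fne: "F \<noteq> {}" using assms(2) by auto
  from xP Gne have xX: "x \<in> X" and xnd: "\<not> (\<exists>y\<in>X. dominates G y x)"
    by (auto simp: pareto_set_def)
  obtain e' where h: "homeomorphism (pareto_set X G) (eval_map G ` pareto_set X G) (eval_map G) e'"
    using assms unfolding simple_problem_def by blast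
  hence inv: "\<And>z. z \<in> pareto_set X G \<Longrightarrow> e' (eval_map G z) = z"
    by (simp add: homeomorphism_def)
  show "x \<in> pareto_set X F"
  proof (rule ccontr)
    assume "x \<notin> pareto_set X F"
    then obtain y where yX: "y \<in> X" and dom: "dominates F y x"
      using xX Fne by (auto simp: pareto_set_def)
    have le: "\<forall>g\<in>G. g y \<le> g x" using dom assms(2) by (auto simp: dominates_def)
    have eq: "\<forall>g\<in>G. g y = g x"
    proof (rule ccontr)
      assume "\<not> (\<forall>g\<in>G. g y = g x)"
      then obtain g where "g \<in> G" "g y < g x" using le by force
      hence "dominates G y x" using le by (auto simp: dominates_def)
      thus False using xnd yX by blast
    qed
    have "y \<in> pareto_set X G"
    proof -
      have "\<not> (\<exists>z\<in>X. dominates G z y)"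
      proof
        assume "\<exists>z\<in>X. dominates G z y"
        then obtain z where "z \<in> X" "dominates G z y" by blast
        hence "dominates G z x" using eq unfolding dominates_def by force
        thus False using xnd \<open>z \<in> X\<close> by blast
      qed
      thus ?thesis using yX Gne by (simp add: pareto_set_def)
    qed
    moreover have "eval_map G y = eval_map G x"
      using eq by (auto simp: eval_map_def)
    ultimately have "y = x" using inv xP by metis
    thus False using dom by (auto simp: dominates_def)
  qed
qed

end
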